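(* Fix a bin size $B\in\mathbb{N}$, $B\ge 1$, with bin boundaries $L_j=jB$ for $j=1,2,\ldots$, and a level $\alpha\in(0,1)$. Let $T^{(1)},\ldots,T^{(n)},T^{(n+1)}$ be independent and identically distributed random token sequences (reasoning traces), where $T^{(1)},\dots,T^{(n)}$ form the calibration set and $T^{(n+1)}$ is the test trace. For a trace $T$ and prefix length $\ell>0$ let $u(T;\ell)$ be the number of keyword arrivals in the prefix $T[1:\ell]$ divided by $\ell$, and write $u_i(L_j)=u(T^{(i)};L_j)$. For each $i\in\{1,\ldots,n+1\}$ define $$M_i=\max_{j:\,L_j\le |T^{(i)}|} u_i(L_j),$$ with the convention that $M_i=-\infty$ if no boundary satisfies $L_j\le|T^{(i)}|$. Let $k=\lceil (n+1)(1-\alpha)\rceil$ and set $\tau^\star=M_{(k)}$, the $k$-th smallest of $M_1,\ldots,M_n$, with $\tau^\star=+\infty$ if $k>n$. Then $$\mathbb{P}\big(\exists j \text{ with } L_j\le |T^{(n+1)}|:\ u_{n+1}(L_j)>\tau^\star\big)=\mathbb{P}(M_{n+1}>\tau^\star)\le\alpha.$$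
   Context: A reasoning trace $T=(t_1,\ldots,t_L)$ is a finite sequence of tokens of length $|T|=L$. A fixed finite set $\mathcal{K}$ of keyword phrases is given, and the "keyword arrivals" in a trace are a deterministic set of token positions determined by $\mathcal{K}$ (positions at which a keyword phrase is detected by a fixed deterministic matching procedure); thus $u(T;\ell)$ is a deterministic function of $T$ and $\ell$. The stopping rule halts a test trace at the first bin boundary $L_j$ at which $u(T;L_j)>\tau^\star$; the event bounded is the event that the test trace is stopped. *)

theory Defs
  imports "HOL-Probability.Probability"
begin

text \<open>Keyword arrivals of a trace: an arbitrary deterministic function giving the set of
  (1-based) token positions at which a keyword phrase is detected.\<close>

definition kw_rate :: "('a list \<Rightarrow> nat set) \<Rightarrow> 'a list \<Rightarrow> nat \<Rightarrow> real" where
  "kw_rate arr T l = real (card {p \<in> arr T. 1 \<le> p \<and> p \<le> l}) / real l"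

text \<open>Bin boundaries are L_j = j * B for j = 1, 2, ...; M(T) is the maximum of the rate over
  boundaries within the trace, with the convention -\<infinity> (Sup of the empty set in ereal).\<close>

definition max_rate :: "('a list \<Rightarrow> nat set) \<Rightarrow> nat \<Rightarrow> 'a list \<Rightarrow> ereal" where
  "max_rate arr B T = Sup ((\<lambda>j. ereal (kw_rate arr T (j * B))) ` {j. 1 \<le> j \<and> j * B \<le> length T})"

definition conf_threshold :: "real \<Rightarrow> ereal list \<Rightarrow> ereal" where
  "conf_threshold \<alpha> ms =
     (let n = length ms; k = nat \<lceil>(real n + 1) * (1 - \<alpha>)\<rceil>
      in if k > n then \<infinity> else sort ms ! (k - 1))"

end

theory Submission
  imports Defs
begin

lemma len_filter_sort: "length (filter P (sort xs)) = length (filter P (xs::'b::linorder list))"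
proof -
  have "mset (filter P (sort xs)) = mset (filter P xs)" by (simp add: mset_filter)
  then show ?thesis by (metis size_mset)
qed

lemma sort_nth_less:
  fixes ms :: "'b::linorder list"
  assumes "1 \<le> k" "k \<le> length ms"
  shows "sort ms ! (k-1) < x \<longleftrightarrow> k \<le> length (filter (\<lambda>y. y < x) ms)"
proof -
  define xs where "xs = sort ms"
  have s: "sorted xs" and l: "length xs = length ms" by (auto simp: xs_def)
  have eq: "length (filter (\<lambda>y. y < x) ms) = card {i. i < length xs \<and> xs ! i < x}"
    using len_filter_sort[of "\<lambda>y. y < x" ms] by (simp add: xs_def length_filter_conv_card)
  show ?thesis unfolding xs_def[symmetric] eq
  proof
    assume a: "xs ! (k-1) < x"
    have "{0..<k} \<subseteq> {i. i < length xs \<and> xs ! i < x}"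
    proof
      fix i assume "i \<in> {0..<k}"
      then have "i \<le> k - 1" "k - 1 < length xs" using assms l by auto
      then have "xs ! i \<le> xs ! (k-1)" using s by (simp add: sorted_nth_mono)
      then show "i \<in> {i. i < length xs \<and> xs ! i < x}" using a \<open>i \<le> k-1\<close> \<open>k-1 < length xs\<close> by auto
    qed
    then have "card {0..<k} \<le> card {i. i < length xs \<and> xs ! i < x}"
      by (intro card_mono) auto
    then show "k \<le> card {i. i < length xs \<and> xs ! i < x}" by simp
  next
    assume a: "k \<le> card {i. i < length xs \<and> xs ! i < x}"
    show "xs ! (k-1) < x"
    proof (rule ccontr)
      assume "\<not> xs ! (k-1) < x"
      then have b: "x \<le> xs ! (k-1)" by simp
      have "{i. i < length xs \<and> xs ! i < x} \<subseteq> {0..<k-1}"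
      proof
        fix i assume i: "i \<in> {i. i < length xs \<and> xs ! i < x}"
        show "i \<in> {0..<k-1}"
        proof (rule ccontr)
          assume "i \<notin> {0..<k-1}"
          then have "k - 1 \<le> i" by simp
          then have "xs ! (k-1) \<le> xs ! i" using s i by (simp add: sorted_nth_mono)
          then show False using i b by auto
        qed
      qed
      then have "card {i. i < length xs \<and> xs ! i < x} \<le> card {0..<k-1}"
        by (intro card_mono) auto
      then have "card {i. i < length xs \<and> xs ! i < x} \<le> k - 1" by simp
      then show False using a assms by linarith
    qed
  qed
qed

lemma count_bound:
  fixes s :: "nat \<Rightarrow> 'b::linorder"
  assumes "finite I"
  shows "card {i\<in>I. k \<le> card {j\<in>I. s j < s i}} \<le> card I - k"
proof (cases "{i\<in>I. k \<le> card {j\<in>I. s j < s i}} = {}")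
  case True then show ?thesis by (metis card.empty zero_le)
next
  case False
  define J where "J = {i\<in>I. k \<le> card {j\<in>I. s j < s i}}"
  have fJ: "finite J" using assms by (simp add: J_def)
  have ne: "J \<noteq> {}" using False J_def by simp
  have "Min (s ` J) \<in> s ` J" using fJ ne by (intro Min_in) auto
  then obtain i0 where i0J: "i0 \<in> J" and i0m: "s i0 = Min (s ` J)" by auto
  have i0: "i0 \<in> J" "\<And>i. i \<in> J \<Longrightarrow> s i0 \<le> s i"
    using i0J i0m fJ by auto
  have "{j\<in>I. s j < s i0} \<subseteq> I - J" using i0 by (auto simp: J_def dest: leD)
  then have "card {j\<in>I. s j < s i0} \<le> card (I - J)" using assms by (intro card_mono) auto
  also have "\<dots> = card I - card J" using assms J_def by (intro card_Diff_subset) auto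
  finally have "k \<le> card I - card J" using i0 J_def by auto
  moreover have "card J \<le> card I" using assms by (intro card_mono) (auto simp: J_def)
  ultimately show ?thesis unfolding J_def[symmetric] by linarith
qed

lemma PiM_all_sets:
  fixes I :: "nat set" and Mi :: "nat \<Rightarrow> 'b::countable measure"
  assumes "finite I" "\<And>i. i \<in> I \<Longrightarrow> sets (Mi i) = sets (count_space UNIV)"
    and "A \<subseteq> space (PiM I Mi)"
  shows "A \<in> sets (PiM I Mi)"
proof -
  have sp: "space (PiM I Mi) = PiE I (\<lambda>_. UNIV)"
    unfolding space_PiM by (rule PiE_cong) (metis assms(2) sets_eq_imp_space_eq space_count_space)
  have "countable (PiE I (\<lambda>_. UNIV::'b set))" using assms(1) by (intro countable_PiE) auto
  then have c: "countable A" using assms(3) sp countable_subset by metis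
  show ?thesis
  proof (rule sets.countable[OF _ c])
    fix a assume "a \<in> A"
    then have a: "a \<in> PiE I (\<lambda>_. UNIV)" using assms(3) sp by auto
    have "{a} = PiE I (\<lambda>i. {a i})" using a by (simp add: PiE_singleton PiE_iff)
    moreover have "PiE I (\<lambda>i. {a i}) \<in> sets (PiM I Mi)"
    proof (rule sets_PiM_I_finite[OF assms(1)])
      fix i assume "i \<in> I"
      then show "{a i} \<in> sets (Mi i)" using assms(2) by simp
    qed
    ultimately show "{a} \<in> sets (PiM I Mi)" by simp
  qed
qed

theorem proposition1:
  fixes M :: "'m measure"
    and X :: "nat \<Rightarrow> 'm \<Rightarrow> ('a::countable) list"
    and arr :: "'a list \<Rightarrow> nat set"
    and B n :: nat and \<alpha> :: real
  assumes "prob_space M"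
    and "B \<ge> 1"
    and "0 < \<alpha>" "\<alpha> < 1"
    and "prob_space.indep_vars M (\<lambda>_. count_space UNIV) X {1..n+1}"
    and "\<And>i. i \<in> {1..n+1} \<Longrightarrow>
           distr M (count_space UNIV) (X i) = distr M (count_space UNIV) (X 1)"
  defines "\<tau> \<equiv> \<lambda>\<omega>. conf_threshold \<alpha> (map (\<lambda>i. max_rate arr B (X i \<omega>)) [1..<n+1])"
  shows "measure M {\<omega> \<in> space M. \<exists>j\<ge>1. j * B \<le> length (X (n+1) \<omega>) \<and>
                         ereal (kw_rate arr (X (n+1) \<omega>) (j * B)) > \<tau> \<omega>}
           = measure M {\<omega> \<in> space M. max_rate arr B (X (n+1) \<omega>) > \<tau> \<omega>}
       \<and> measure M {\<omega> \<in> space M. max_rate arr B (X (n+1) \<omega>) > \<tau> \<omega>} \<le> \<alpha>"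
proof -
  interpret P: prob_space M by fact
  define N where "N = n+1"
  define I where "I = {1..N}"
  define S where "S = (\<lambda>i \<omega>. max_rate arr B (X i \<omega>))"
  define k where "k = nat \<lceil>(real n + 1) * (1 - \<alpha>)\<rceil>"
  have part1: "{\<omega> \<in> space M. \<exists>j\<ge>1. j * B \<le> length (X (n+1) \<omega>) \<and> ereal (kw_rate arr (X (n+1) \<omega>) (j * B)) > \<tau> \<omega>} = {\<omega> \<in> space M. max_rate arr B (X (n+1) \<omega>) > \<tau> \<omega>}"
    unfolding max_rate_def less_Sup_iff by auto
  have part2: "measure M {\<omega> \<in> space M. max_rate arr B (X (n+1) \<omega>) > \<tau> \<omega>} \<le> \<alpha>"
  proof (cases "k > n")
    case True
    have "{\<omega> \<in> space M. max_rate arr B (X (n+1) \<omega>) > \<tau> \<omega>} = {}"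
      using True assms(4) by (auto simp: \<tau>_def conf_threshold_def k_def Let_def)
    then show ?thesis using assms(3) by (metis measure_empty less_imp_le)
  next
    case False
    have "0 < (real n + 1) * (1 - \<alpha>)" using assms(4) by simp
    then have k1: "1 \<le> k" unfolding k_def by linarith
    have kge: "(real n + 1) * (1 - \<alpha>) \<le> real k" unfolding k_def by linarith
    have fI: "finite I" and NI: "N \<in> I" by (auto simp: I_def N_def)
    have rv: "\<And>i. i \<in> I \<Longrightarrow> X i \<in> measurable M (count_space UNIV)"
    proof -
      have "\<forall>i\<in>{1..n+1}. X i \<in> measurable M (count_space UNIV)"
        using assms(5) unfolding P.indep_vars_def by (rule conjunct1)
      then show "\<And>i. i \<in> I \<Longrightarrow> X i \<in> measurable M (count_space UNIV)"
        unfolding I_def N_def by blast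
    qed
    have ev: "(\<tau> \<omega> < S N \<omega>) \<longleftrightarrow> k \<le> card {j\<in>I. S j \<omega> < S N \<omega>}" for \<omega>
    proof -
      define ms where "ms = map (\<lambda>i. S i \<omega>) [1..<n+1]"
      have len: "length ms = n" by (simp add: ms_def)
      have t1: "\<tau> \<omega> = conf_threshold \<alpha> ms" by (simp add: \<tau>_def ms_def S_def)
      have t2: "conf_threshold \<alpha> ms = sort ms ! (k-1)"
        unfolding conf_threshold_def Let_def len k_def[symmetric] using False by simp
      have "\<tau> \<omega> = sort ms ! (k-1)" using t1 t2 by simp
      then have "(\<tau> \<omega> < S N \<omega>) \<longleftrightarrow> k \<le> length (filter (\<lambda>y. y < S N \<omega>) ms)"
        using sort_nth_less[of k ms "S N \<omega>"] k1 False len by simp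
      also have "length (filter (\<lambda>y. y < S N \<omega>) ms) = card ({j. S j \<omega> < S N \<omega>} \<inter> set [1..<n+1])"
        unfolding ms_def filter_map length_map by (subst distinct_length_filter) (auto simp: o_def)
      also have "{j. S j \<omega> < S N \<omega>} \<inter> set [1..<n+1] = {j\<in>I. S j \<omega> < S N \<omega>}"
      proof -
        have su: "set [1..<n+1] = {1..<N}" unfolding set_upt N_def ..
        have ne: "j \<noteq> N" if "S j \<omega> < S N \<omega>" for j using that by auto
        have "{1..<N} = {1..N} - {N}" by auto
        then show ?thesis unfolding su I_def using ne by auto
      qed
      finally show ?thesis .
    qed
    define E where "E = (\<lambda>i. {\<omega>\<in>space M. k \<le> card {j\<in>I. S j \<omega> < S i \<omega>}})"
    have target: "{\<omega> \<in> space M. max_rate arr B (X (n+1) \<omega>) > \<tau> \<omega>} = E N"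
      using ev by (auto simp: E_def S_def N_def)
    define PS where "PS = PiM I (\<lambda>_. count_space (UNIV :: 'a list set))"
    define Xv where "Xv = (\<lambda>\<omega>. \<lambda>i\<in>I. X i \<omega>)"
    have Xv_meas: "Xv \<in> measurable M PS"
      unfolding Xv_def PS_def by (intro measurable_restrict rv)
    define P0 where "P0 = distr M (count_space (UNIV :: 'a list set)) (X 1)"
    have P0: "prob_space P0" unfolding P0_def
      using rv[of 1] NI by (intro P.prob_space_distr) (auto simp: I_def)
    define Q where "Q = PiM I (\<lambda>_. P0)"
    have D: "distr M PS Xv = Q"
    proof -
      have "distr M PS Xv = PiM I (\<lambda>i. distr M (count_space UNIV) (X i))"
      proof -
        have ind: "P.indep_vars (\<lambda>_. count_space UNIV) X I"
          using assms(5) unfolding I_def N_def .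
        have ne: "I \<noteq> {}" using NI by blast
        have eq: "distr M (PiM I (\<lambda>_. count_space UNIV)) (\<lambda>x. \<lambda>i\<in>I. X i x) = PiM I (\<lambda>i. distr M (count_space UNIV) (X i))"
          using P.indep_vars_iff_distr_eq_PiM'[where M'="\<lambda>_. count_space UNIV" and X=X, OF ne rv] ind by (rule iffD1)
        show ?thesis unfolding PS_def Xv_def by (rule eq)
      qed
      also have "\<dots> = Q" unfolding Q_def P0_def
      proof (rule PiM_cong)
        fix i assume "i \<in> I"
        then have i: "i \<in> {1..n+1}" unfolding I_def N_def .
        show "distr M (count_space UNIV) (X i) = distr M (count_space UNIV) (X 1)"
          by (rule assms(6)[OF i])
      qed (rule refl)
      finally show ?thesis .
    qed
    have setsQ: "sets Q = sets PS" unfolding Q_def PS_def P0_def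
      by (intro sets_PiM_cong) auto
    have spQ: "space Q = space PS" using setsQ by (rule sets_eq_imp_space_eq)
    have allsets: "A \<subseteq> space PS \<Longrightarrow> A \<in> sets PS" for A
      unfolding PS_def using fI by (intro PiM_all_sets) auto
    define A where "A = (\<lambda>i. {x \<in> space PS. k \<le> card {j\<in>I. max_rate arr B (x j) < max_rate arr B (x i)}})"
    have EA: "i \<in> I \<Longrightarrow> E i = Xv -` A i \<inter> space M" for i
    proof -
      assume i: "i \<in> I"
      have "Xv \<omega> \<in> space PS" if "\<omega> \<in> space M" for \<omega>
        using Xv_meas that by (rule measurable_space)
      moreover have "{j\<in>I. max_rate arr B (Xv \<omega> j) < max_rate arr B (Xv \<omega> i)} = {j\<in>I. S j \<omega> < S i \<omega>}" for \<omega>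
        using i by (auto simp: Xv_def S_def)
      ultimately show ?thesis by (auto simp: E_def A_def)
    qed
    have Esets: "i \<in> I \<Longrightarrow> E i \<in> sets M" for i
      using EA[of i] Xv_meas allsets[of "A i"] by (auto simp: A_def intro: measurable_sets)
    have mE: "i \<in> I \<Longrightarrow> measure M (E i) = measure Q (A i)" for i
      using EA[of i] allsets[of "A i"] Xv_meas D[symmetric] by (auto simp: A_def measure_distr)
    have swap: "measure Q (A i) = measure Q (A N)" if i: "i \<in> I" for i
    proof -
      define \<sigma> where "\<sigma> = (\<lambda>m. if m = i then N else if m = N then i else m)"
      have \<sigma>\<sigma>: "\<sigma> (\<sigma> m) = m" for m by (auto simp: \<sigma>_def)
      have \<sigma>N: "\<sigma> N = i" by (simp add: \<sigma>_def)
      have \<sigma>I: "\<sigma> m \<in> I" if "m \<in> I" for m using that i NI by (auto simp: \<sigma>_def)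
      have inj: "inj_on \<sigma> I" by (metis \<sigma>\<sigma> inj_on_inverseI)
      define t where "t = (\<lambda>x::nat \<Rightarrow> 'a list. \<lambda>m\<in>I. x (\<sigma> m))"
      have dt: "distr Q Q t = Q" unfolding Q_def t_def
        using distr_PiM_reindex[of I "\<lambda>_. P0" \<sigma> I] P0 inj \<sigma>I by auto
      have tm: "t \<in> measurable Q Q" unfolding t_def Q_def
        using \<sigma>I by (intro measurable_restrict measurable_component_singleton) auto
      have AN: "A N \<in> sets Q" using allsets[of "A N"] setsQ by (auto simp: A_def)
      have "measure Q (A N) = measure Q (t -` A N \<inter> space Q)"
        using measure_distr[OF tm AN] dt by simp
      also have "t -` A N \<inter> space Q = A i"
      proof -
        have "t x \<in> space PS" if "x \<in> space PS" for x
          using tm that spQ measurable_space by metis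
        moreover have "{j\<in>I. max_rate arr B (t x j) < max_rate arr B (t x N)} =
                  \<sigma> ` {j\<in>I. max_rate arr B (x j) < max_rate arr B (x i)}" for x
        proof -
          have "{j\<in>I. max_rate arr B (t x j) < max_rate arr B (t x N)} =
                  {j\<in>I. max_rate arr B (x (\<sigma> j)) < max_rate arr B (x i)}"
            using NI \<sigma>N \<sigma>I by (auto simp: t_def)
          also have "\<dots> = \<sigma> ` {j\<in>I. max_rate arr B (x j) < max_rate arr B (x i)}"
          proof (intro equalityI subsetI)
            fix j assume j: "j \<in> {j\<in>I. max_rate arr B (x (\<sigma> j)) < max_rate arr B (x i)}"
            have "\<sigma> j \<in> {j\<in>I. max_rate arr B (x j) < max_rate arr B (x i)}" using j \<sigma>I by blast
            moreover have "j = \<sigma> (\<sigma> j)" by (rule \<sigma>\<sigma>[symmetric])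
            ultimately show "j \<in> \<sigma> ` {j\<in>I. max_rate arr B (x j) < max_rate arr B (x i)}" by (rule rev_image_eqI)
          next
            fix j assume "j \<in> \<sigma> ` {j\<in>I. max_rate arr B (x j) < max_rate arr B (x i)}"
            then obtain j' where j': "j' \<in> I" "max_rate arr B (x j') < max_rate arr B (x i)" "j = \<sigma> j'" by blast
            then show "j \<in> {j\<in>I. max_rate arr B (x (\<sigma> j)) < max_rate arr B (x i)}" using \<sigma>I \<sigma>\<sigma> by simp
          qed
          finally show ?thesis .
        qed
        moreover have "card (\<sigma> ` {j\<in>I. max_rate arr B (x j) < max_rate arr B (x i)}) =
                  card {j\<in>I. max_rate arr B (x j) < max_rate arr B (x i)}" for x
          by (rule card_image[OF inj_on_subset[OF inj]]) blast
        ultimately show ?thesis unfolding spQ by (auto simp: A_def)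
      qed
      finally show ?thesis by simp
    qed
    have eqm: "measure M (E i) = measure M (E N)" if i: "i \<in> I" for i
    proof -
      have "measure M (E i) = measure Q (A i)" by (rule mE[OF i])
      also have "\<dots> = measure Q (A N)" by (rule swap[OF i])
      also have "\<dots> = measure M (E N)" by (rule mE[OF NI, symmetric])
      finally show ?thesis .
    qed
    have int_ind: "i \<in> I \<Longrightarrow> integrable M (indicator (E i) :: 'm \<Rightarrow> real)" for i
      using Esets P.emeasure_finite by (intro integrable_real_indicator) (auto simp: less_top[symmetric])
    have "(\<Sum>i\<in>I. measure M (E i)) = (\<Sum>i\<in>I. integral\<^sup>L M (indicator (E i)))"
      using Esets by (simp add: Int_absorb2 sets.sets_into_space)
    also have "\<dots> = integral\<^sup>L M (\<lambda>\<omega>. \<Sum>i\<in>I. indicator (E i) \<omega>)"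
      using int_ind by (rule Bochner_Integration.integral_sum[symmetric])
    also have "\<dots> \<le> integral\<^sup>L M (\<lambda>_. real (card I - k))"
    proof (rule integral_mono)
      show "integrable M (\<lambda>\<omega>. \<Sum>i\<in>I. indicator (E i) \<omega> :: real)"
        using int_ind by (intro Bochner_Integration.integrable_sum) auto
      show "integrable M (\<lambda>_. real (card I - k))" by simp
      fix \<omega> assume \<omega>: "\<omega> \<in> space M"
      have s1: "(\<Sum>i\<in>I. indicator (E i) \<omega> :: real) = (\<Sum>i\<in>I. if \<omega> \<in> E i then 1 else 0)"
        by (simp add: indicator_def of_bool_def)
      have s2: "(\<Sum>i\<in>I. if \<omega> \<in> E i then 1 else 0 :: real) = real (card {i\<in>I. \<omega> \<in> E i})"
        using fI by (simp add: sum.If_cases Int_def)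
      have s3: "{i\<in>I. \<omega> \<in> E i} = {i\<in>I. k \<le> card {j\<in>I. S j \<omega> < S i \<omega>}}"
        using \<omega> by (auto simp: E_def)
      have s4: "card {i\<in>I. k \<le> card {j\<in>I. S j \<omega> < S i \<omega>}} \<le> card I - k"
        using fI by (rule count_bound)
      show "(\<Sum>i\<in>I. indicator (E i) \<omega> :: real) \<le> real (card I - k)"
        unfolding s1 s2 s3 using s4 by simp
    qed
    also have "\<dots> = real (card I - k)" by (simp add: P.prob_space)
    finally have le: "(\<Sum>i\<in>I. measure M (E i)) \<le> real (card I - k)" .
    have "(\<Sum>i\<in>I. measure M (E i)) = (\<Sum>i\<in>I. measure M (E N))"
      by (rule sum.cong[OF refl eqm])
    also have "\<dots> = real N * measure M (E N)" by (simp add: I_def N_def)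
    finally have le2: "real N * measure M (E N) \<le> real (card I - k)" using le by simp
    have "real (card I - k) = real N - real k" using False by (simp add: I_def N_def of_nat_diff)
    then have "real N * measure M (E N) \<le> real N - real k" using le2 by simp
    then have "real N * measure M (E N) \<le> real N * \<alpha>"
      using kge by (simp add: N_def algebra_simps)
    then have "measure M (E N) \<le> \<alpha>" by (simp add: N_def)
    then show ?thesis using target by simp
  qed
  show ?thesis using part1 part2 by simp
qed

end
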